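(* Let $r\ge1$ and $s\ge1$ be integers, let $u<v$, and let $g$ be a function whose derivative $g^{(r+s-1)}$ exists and is continuous on an open interval containing $[u,v]$. For nonnegative integers $i,j$ and $x\ne y$ define \[ {}_iM_j(x,y)=\frac{\partial^{i+j}}{\partial x^i\,\partial y^j}\left(\frac{g(y)-g(x)}{y-x}\right). \] Then \[ E\left[g^{(r+s-1)}(B_{r,s}(u,v))\right]=\frac{1}{B(r,s)}\ {}_{r-1}M_{s-1}(u,v), \] i.e. \[ \int_u^v g^{(r+s-1)}(t)\,(t-u)^{s-1}(v-t)^{r-1}\,dt=(v-u)^{r+s-1}\ {}_{r-1}M_{s-1}(u,v). \]
   Context: For $r>0$, $s>0$ and $u<v$, $B_{r,s}(u,v)$ denotes a generalized Beta random variable with density \[ f_B(y)=\frac{1}{B(r,s)}\frac{(y-u)^{s-1}(v-y)^{r-1}}{(v-u)^{r+s-1}},\qquad u\le y\le v, \] where $B(\cdot,\cdot)$ is the Beta function. *)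

theory Defs
  imports "HOL-Analysis.Analysis"
begin

definition Mij :: "(real \<Rightarrow> real) \<Rightarrow> nat \<Rightarrow> nat \<Rightarrow> real \<Rightarrow> real \<Rightarrow> real" where
  "Mij g i j x y =
     (deriv ^^ i) (\<lambda>x'. (deriv ^^ j) (\<lambda>y'. (g y' - g x') / (y' - x')) y) x"

definition beta_density :: "nat \<Rightarrow> nat \<Rightarrow> real \<Rightarrow> real \<Rightarrow> real \<Rightarrow> real" where
  "beta_density r s u v y =
     (1 / Beta (real r) (real s)) * ((y - u) ^ (s - 1) * (v - y) ^ (r - 1)) / (v - u) ^ (r + s - 1)"

end

theory Submission
  imports Defs
begin
lemma conv_mem: fixes a b c y e :: real
  assumes "c\<in>{a<..<b}" "y\<in>{a<..<b}" "e\<in>{0..1}" shows "c + e*(y-c) \<in> {a<..<b}"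
proof -
  have e: "0 \<le> e" "e \<le> 1" using assms by auto
  have "e*(y-a) \<ge> 0" "(1-e)*(c-a) \<ge> 0" "e*(b-y) \<ge> 0" "(1-e)*(b-c) \<ge> 0" using assms e by auto
  moreover have "e*(y-a) + (1-e)*(c-a) > 0"
    using assms e by (cases "e = 1") (auto intro!: add_pos_nonneg add_nonneg_pos)
  moreover have "e*(b-y) + (1-e)*(b-c) > 0"
    using assms e by (cases "e = 1") (auto intro!: add_pos_nonneg add_nonneg_pos)
  ultimately show ?thesis by (auto simp: algebra_simps)
qed

lemma param_deriv:
  fixes \<phi> \<phi>' e w :: "real \<Rightarrow> real" and a b c y :: real
  assumes d: "\<And>z. z\<in>{a<..<b} \<Longrightarrow> (\<phi> has_real_derivative \<phi>' z) (at z)"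
    and c1: "continuous_on {a<..<b} \<phi>'" and c2: "continuous_on {0..1} e" and c3: "continuous_on {0..1} w"
    and er: "\<And>t. t\<in>{0..1} \<Longrightarrow> e t \<in> {0..1}" and c: "c \<in> {a<..<b}" and y: "y \<in> {a<..<b}"
  shows "((\<lambda>y. integral {0..1} (\<lambda>t. \<phi> (c + e t * (y - c)) * w t)) has_real_derivative
           integral {0..1} (\<lambda>t. \<phi>' (c + e t * (y - c)) * e t * w t)) (at y)"
proof -
  have mem: "\<And>y t. y \<in> {a<..<b} \<Longrightarrow> t \<in> {0..1} \<Longrightarrow> c + e t * (y - c) \<in> {a<..<b}"
    by (rule conv_mem[OF c _ er])
  have cphi: "continuous_on {a<..<b} \<phi>"
    by (rule DERIV_continuous_on) (use d at_within_open[of _ "{a<..<b}"] in auto)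
  have "((\<lambda>y. integral (cbox 0 1) (\<lambda>t. \<phi> (c + e t * (y - c)) * w t)) has_real_derivative
           integral (cbox 0 1) (\<lambda>t. \<phi>' (c + e t * (y - c)) * e t * w t)) (at y within {a<..<b})"
  proof (rule leibniz_rule_field_derivative[where U="{a<..<b}"])
    fix x t assume x: "x \<in> {a<..<b}" and t: "t \<in> cbox (0::real) 1"
    have t': "t \<in> {0..1}" using t by simp
    have "((\<lambda>x. c + e t * (x - c)) has_real_derivative 0 + e t * (1 - 0)) (at x)"
      by (intro DERIV_add DERIV_const DERIV_cmult DERIV_diff DERIV_ident)
    then have "((\<lambda>x. c + e t * (x - c)) has_real_derivative e t) (at x)" by simp
    from DERIV_chain'[OF this d[OF mem[OF x t']]]
    have ch: "((\<lambda>x. \<phi> (c + e t * (x - c))) has_real_derivative \<phi>' (c + e t * (x - c)) * e t) (at x)" .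
    show "((\<lambda>x. \<phi> (c + e t * (x - c)) * w t) has_real_derivative \<phi>' (c + e t * (x - c)) * e t * w t) (at x within {a<..<b})"
      using DERIV_cmult_right[OF ch, of "w t"] by (rule has_field_derivative_at_within)
  next
    fix x assume x: "x \<in> {a<..<b}"
    have "continuous_on {0..1} (\<lambda>t. \<phi> (c + e t * (x - c)) * w t)"
      by (intro continuous_intros continuous_on_compose2[OF cphi, where f="\<lambda>t. c + e t * (x - c)"] c2 c3)
         (use mem x in auto)
    then show "(\<lambda>t. \<phi> (c + e t * (x - c)) * w t) integrable_on cbox 0 1"
      by (simp add: integrable_continuous_interval)
  next
    have "continuous_on ({a<..<b} \<times> {0..1}) (\<lambda>p. e (snd p))"
      by (rule continuous_on_compose2[OF c2 continuous_on_snd]) auto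
    moreover have "continuous_on ({a<..<b} \<times> {0..1}) (\<lambda>p. w (snd p))"
      by (rule continuous_on_compose2[OF c3 continuous_on_snd]) auto
    ultimately have ce: "continuous_on ({a<..<b} \<times> {0..1}) (\<lambda>p. c + e (snd p) * (fst p - c))"
      by (intro continuous_intros)
    have "continuous_on ({a<..<b} \<times> {0..1}) (\<lambda>p. \<phi>' (c + e (snd p) * (fst p - c)))"
      by (rule continuous_on_compose2[OF c1 ce]) (use mem in auto)
    with \<open>continuous_on ({a<..<b} \<times> {0..1}) (\<lambda>p. e (snd p))\<close> \<open>continuous_on ({a<..<b} \<times> {0..1}) (\<lambda>p. w (snd p))\<close>
    have "continuous_on ({a<..<b} \<times> {0..1}) (\<lambda>p. \<phi>' (c + e (snd p) * (fst p - c)) * e (snd p) * w (snd p))"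
      by (intro continuous_intros)
    then show "continuous_on ({a<..<b} \<times> cbox 0 1) (\<lambda>(x, t). \<phi>' (c + e t * (x - c)) * e t * w t)"
      by (simp add: case_prod_beta)
  qed (use y in auto)
  then show ?thesis by (simp add: at_within_open[OF y])
qed

definition Gf :: "(nat \<Rightarrow> real \<Rightarrow> real) \<Rightarrow> nat \<Rightarrow> nat \<Rightarrow> real \<Rightarrow> real \<Rightarrow> real" where
  "Gf D i j x y = integral {0..1} (\<lambda>t. D (Suc (i+j)) (x + t*(y-x)) * ((1-t)^i * t^j))"

lemma cont_w: "continuous_on {0..1::real} (\<lambda>t. (1-t)^i * t^j)"
  by (intro continuous_intros)

lemma Gy:
  fixes D :: "nat \<Rightarrow> real \<Rightarrow> real"
  assumes hd: "\<And>k z. k < N \<Longrightarrow> z \<in> {a<..<b} \<Longrightarrow> (D k has_real_derivative D (Suc k) z) (at z)"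
    and hc: "\<And>k. k \<le> N \<Longrightarrow> continuous_on {a<..<b} (D k)"
    and k: "Suc (i+j) < N" and x: "x \<in> {a<..<b}" and y: "y \<in> {a<..<b}"
  shows "((\<lambda>y. Gf D i j x y) has_real_derivative Gf D i (Suc j) x y) (at y)"
proof -
  have "((\<lambda>y. integral {0..1} (\<lambda>t. D (Suc (i+j)) (x + t * (y - x)) * ((1-t)^i * t^j))) has_real_derivative
           integral {0..1} (\<lambda>t. D (Suc (Suc (i+j))) (x + t * (y - x)) * t * ((1-t)^i * t^j))) (at y)"
    by (rule param_deriv[where a=a and b=b, OF hd hc continuous_on_id cont_w _ x y]) (use k in auto)
  moreover have "integral {0..1} (\<lambda>t. D (Suc (Suc (i+j))) (x + t * (y - x)) * t * ((1-t)^i * t^j))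
      = Gf D i (Suc j) x y"
    unfolding Gf_def by (intro integral_cong) (simp add: algebra_simps)
  ultimately show ?thesis unfolding Gf_def by simp
qed

lemma Gx:
  fixes D :: "nat \<Rightarrow> real \<Rightarrow> real"
  assumes hd: "\<And>k z. k < N \<Longrightarrow> z \<in> {a<..<b} \<Longrightarrow> (D k has_real_derivative D (Suc k) z) (at z)"
    and hc: "\<And>k. k \<le> N \<Longrightarrow> continuous_on {a<..<b} (D k)"
    and k: "Suc (i+j) < N" and x: "x \<in> {a<..<b}" and y: "y \<in> {a<..<b}"
  shows "((\<lambda>x. Gf D i j x y) has_real_derivative Gf D (Suc i) j x y) (at x)"
proof -
  have e: "\<And>t x. x + t*(y-x) = y + (1-t)*(x-y)" by algebra
  have ce: "continuous_on {0..1::real} (\<lambda>t. 1 - t)" by (intro continuous_intros)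
  have "((\<lambda>x. integral {0..1} (\<lambda>t. D (Suc (i+j)) (y + (1-t) * (x - y)) * ((1-t)^i * t^j))) has_real_derivative
           integral {0..1} (\<lambda>t. D (Suc (Suc (i+j))) (y + (1-t) * (x - y)) * (1-t) * ((1-t)^i * t^j))) (at x)"
    by (rule param_deriv[where a=a and b=b, OF hd hc ce cont_w _ y x]) (use k in auto)
  moreover have "integral {0..1} (\<lambda>t. D (Suc (Suc (i+j))) (y + (1-t) * (x - y)) * (1-t) * ((1-t)^i * t^j))
      = Gf D (Suc i) j x y"
    unfolding Gf_def e by (intro integral_cong) (simp add: algebra_simps)
  ultimately show ?thesis unfolding Gf_def e by simp
qed


lemma G00:
  fixes D :: "nat \<Rightarrow> real \<Rightarrow> real"
  assumes hd: "\<And>z. z \<in> {a<..<b} \<Longrightarrow> (D 0 has_real_derivative D (Suc 0) z) (at z)"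
    and x: "x \<in> {a<..<b}" and y: "y \<in> {a<..<b}" and xy: "x \<noteq> y"
  shows "(D 0 y - D 0 x) / (y - x) = Gf D 0 0 x y"
proof -
  have "((\<lambda>t. D 1 (x + t*(y-x)) * (y - x)) has_integral (D 0 (x + 1*(y-x)) - D 0 (x + 0*(y-x)))) {0..1}"
  proof (rule fundamental_theorem_of_calculus)
    fix t :: real assume t: "t \<in> {0..1}"
    have "((\<lambda>t. x + t * (y - x)) has_real_derivative 0 + 1 * (y - x)) (at t)"
      by (intro DERIV_add DERIV_const DERIV_cmult_right DERIV_ident)
    then have l: "((\<lambda>t. x + t * (y - x)) has_real_derivative (y - x)) (at t)" by simp
    have "x + t*(y-x) \<in> {a<..<b}" using conv_mem[OF x y t] by (simp add: algebra_simps)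
    from DERIV_chain'[OF l hd[OF this]]
    show "((\<lambda>t. D 0 (x + t*(y-x))) has_vector_derivative D 1 (x + t*(y-x)) * (y - x)) (at t within {0..1})"
      by (simp add: has_real_derivative_iff_has_vector_derivative[symmetric] has_field_derivative_at_within)
  qed simp
  then have "integral {0..1} (\<lambda>t. D 1 (x + t*(y-x)) * (y - x)) = D 0 (x + 1*(y-x)) - D 0 (x + 0*(y-x))"
    by (rule integral_unique)
  then have "integral {0..1} (\<lambda>t. D 1 (x + t*(y-x)) * (y - x)) = D 0 y - D 0 x"
    by simp
  moreover have "integral {0..1} (\<lambda>t. D 1 (x + t*(y-x)) * (y - x)) = Gf D 0 0 x y * (y - x)"
    unfolding Gf_def using integral_cmul[of "{0..1}" "y - x" "\<lambda>t. D 1 (x + t*(y-x))"]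
    by (simp add: mult.commute)
  ultimately show ?thesis using xy by (simp add: field_simps)
qed


theorem mainTheorem5:
  fixes g :: "real \<Rightarrow> real" and r s :: nat and u v a b :: real
  assumes "r \<ge> 1" and "s \<ge> 1" and "u < v"
    and "a < u" and "v < b"
    and "\<And>k x. k < r + s - 1 \<Longrightarrow> x \<in> {a<..<b} \<Longrightarrow>
           ((deriv ^^ k) g has_real_derivative (deriv ^^ Suc k) g x) (at x)"
    and "continuous_on {a<..<b} ((deriv ^^ (r + s - 1)) g)"
  shows "integral {u..v} (\<lambda>y. (deriv ^^ (r + s - 1)) g y * beta_density r s u v y)
           = (1 / Beta (real r) (real s)) * Mij g (r - 1) (s - 1) u v
       \<and> integral {u..v} (\<lambda>t. (deriv ^^ (r + s - 1)) g t * (t - u) ^ (s - 1) * (v - t) ^ (r - 1))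
           = (v - u) ^ (r + s - 1) * Mij g (r - 1) (s - 1) u v"
proof -
  obtain p where r: "r = Suc p" using assms(1) by (cases r) auto
  obtain q where s: "s = Suc q" using assms(2) by (cases s) auto
  define D where "D = (\<lambda>k. (deriv ^^ k) g)"
  define N where "N = Suc (p + q)"
  define I where "I = {a<..<b}"
  have N: "r + s - 1 = N" using r s N_def by simp
  have rm: "r - 1 = p" "s - 1 = q" using r s by auto
  have DN: "(deriv ^^ N) g = D N" by (simp add: D_def)
  have hd: "\<And>k z. k < N \<Longrightarrow> z \<in> {a<..<b} \<Longrightarrow> (D k has_real_derivative D (Suc k) z) (at z)"
    using assms(6) N by (simp add: D_def)
  have hc: "continuous_on {a<..<b} (D k)" if k: "k \<le> N" for k
  proof (cases "k < N")
    case True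
    show ?thesis
      by (rule DERIV_continuous_on[of _ _ "D (Suc k)"])
         (use hd[OF True] at_within_open[of _ "{a<..<b}"] in auto)
  next
    case False
    with k have "k = N" by simp
    then show ?thesis using assms(7) N by (simp add: D_def)
  qed
  have D0: "D 0 = g" by (simp add: D_def)
  have opn: "open (I - {x})" for x unfolding I_def by (intro open_Diff) auto
  have step1: "\<forall>y\<in>I - {x}. (deriv ^^ j) (\<lambda>y'. (g y' - g x) / (y' - x)) y = Gf D 0 j x y"
    if x: "x \<in> I" and j: "j \<le> q" for x j
    using j
  proof (induction j)
    case 0
    show ?case
    proof
      fix y assume y: "y \<in> I - {x}"
      have "(D 0 y - D 0 x) / (y - x) = Gf D 0 0 x y"
        by (rule G00[where a=a and b=b]) (use hd[of 0] x y N_def I_def in auto)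
      then show "(deriv ^^ 0) (\<lambda>y'. (g y' - g x) / (y' - x)) y = Gf D 0 0 x y"
        by (simp add: D0)
    qed
  next
    case (Suc j)
    show ?case
    proof
      fix y assume y: "y \<in> I - {x}"
      have ev: "eventually (\<lambda>z. (deriv ^^ j) (\<lambda>y'. (g y' - g x) / (y' - x)) z = Gf D 0 j x z) (nhds y)"
        using eventually_nhds_in_open[OF opn y] Suc by (auto elim!: eventually_mono)
      have "(deriv ^^ Suc j) (\<lambda>y'. (g y' - g x) / (y' - x)) y
          = deriv ((deriv ^^ j) (\<lambda>y'. (g y' - g x) / (y' - x))) y" by simp
      also have "\<dots> = deriv (\<lambda>z. Gf D 0 j x z) y" by (rule deriv_cong_ev[OF ev refl])
      also have "\<dots> = Gf D 0 (Suc j) x y"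
        by (rule DERIV_imp_deriv, rule Gy[where a=a and b=b and N=N and D=D, OF hd hc])
           (use Suc.prems x y N_def I_def in auto)
      finally show "(deriv ^^ Suc j) (\<lambda>y'. (g y' - g x) / (y' - x)) y = Gf D 0 (Suc j) x y" .
    qed
  qed
  define H where "H = (\<lambda>x'. (deriv ^^ q) (\<lambda>y'. (g y' - g x') / (y' - x')) v)"
  have vI: "v \<in> I" "u \<in> I" using assms(3,4,5) I_def by auto
  have Hb: "H x = Gf D 0 q x v" if "x \<in> I - {v}" for x
    using step1[of x q] that vI unfolding H_def by auto
  have step2: "\<forall>x\<in>I - {v}. (deriv ^^ i) H x = Gf D i q x v" if i: "i \<le> p" for i
    using i
  proof (induction i)
    case 0
    then show ?case using Hb by simp
  next
    case (Suc i)
    show ?case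
    proof
      fix x assume x: "x \<in> I - {v}"
      have ev: "eventually (\<lambda>z. (deriv ^^ i) H z = Gf D i q z v) (nhds x)"
        using eventually_nhds_in_open[OF opn x] Suc by (auto elim!: eventually_mono)
      have "(deriv ^^ Suc i) H x = deriv ((deriv ^^ i) H) x" by simp
      also have "\<dots> = deriv (\<lambda>z. Gf D i q z v) x" by (rule deriv_cong_ev[OF ev refl])
      also have "\<dots> = Gf D (Suc i) q x v"
        by (rule DERIV_imp_deriv, rule Gx[where a=a and b=b and N=N and D=D, OF hd hc])
           (use Suc.prems x vI N_def I_def in auto)
      finally show "(deriv ^^ Suc i) H x = Gf D (Suc i) q x v" .
    qed
  qed
  have M: "Mij g p q u v = Gf D p q u v"
    using step2[of p] vI assms(3) unfolding Mij_def H_def by auto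
  define f where "f = (\<lambda>t. D N t * (t - u) ^ q * (v - t) ^ p)"
  have cf: "continuous_on {u..v} f"
  proof -
    have "continuous_on {u..v} (D N)"
      by (rule continuous_on_subset[OF hc]) (use assms(4,5) in auto)
    then show ?thesis unfolding f_def by (intro continuous_intros)
  qed
  have sub: "((\<lambda>t. (v - u) *\<^sub>R f (u + t * (v - u))) has_integral
      integral {u + 0 * (v - u)..u + 1 * (v - u)} f) {0..1}"
  proof (rule has_integral_substitution[where c=u and d=v, OF _ _ _ cf])
    show "(\<lambda>t. u + t * (v - u)) ` {0..1} \<subseteq> {u..v}"
    proof
      fix z assume "z \<in> (\<lambda>t. u + t * (v - u)) ` {0..1}"
      then obtain t where t: "t \<in> {0..1}" and z: "z = u + t * (v - u)" by auto
      have "t * (v - u) \<ge> 0" "t * (v - u) \<le> 1 * (v - u)"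
        using t assms(3) by (auto intro: mult_right_mono)
      then show "z \<in> {u..v}" using z by auto
    qed
  next
    fix t :: real
    have "((\<lambda>t. u + t * (v - u)) has_real_derivative 0 + 1 * (v - u)) (at t within {0..1})"
      by (intro DERIV_add DERIV_const DERIV_cmult_right DERIV_ident)
    then show "((\<lambda>t. u + t * (v - u)) has_real_derivative (v - u)) (at t within {0..1})" by simp
  qed (use assms(3) in auto)
  have pt: "(v - u) *\<^sub>R f (u + t * (v - u)) = (v - u) ^ N * (D N (u + t * (v - u)) * ((1 - t) ^ p * t ^ q))"
    for t
  proof -
    have e1: "u + t * (v - u) - u = t * (v - u)" and e2: "v - (u + t * (v - u)) = (1 - t) * (v - u)"
      by algebra+
    have "f (u + t * (v - u)) = D N (u + t * (v - u)) * (t * (v - u)) ^ q * ((1 - t) * (v - u)) ^ p"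
      unfolding f_def by (simp only: e1 e2)
    then show ?thesis unfolding N_def
      by (simp add: power_mult_distrib power_add mult_ac)
  qed
  have I2: "integral {u..v} f = (v - u) ^ N * Mij g p q u v"
  proof -
    have "integral {u..v} f = integral {0..1} (\<lambda>t. (v - u) *\<^sub>R f (u + t * (v - u)))"
      using integral_unique[OF sub] by simp
    also have "\<dots> = integral {0..1} (\<lambda>t. (v - u) ^ N * (D N (u + t * (v - u)) * ((1 - t) ^ p * t ^ q)))"
      using pt by simp
    also have "\<dots> = (v - u) ^ N * Gf D p q u v"
      using integral_cmul[of "{0..1}" "(v - u) ^ N" "\<lambda>t. D N (u + t * (v - u)) * ((1 - t) ^ p * t ^ q)"]
      by (simp add: Gf_def N_def)
    finally show ?thesis using M by simp
  qed
  have I1: "integral {u..v} (\<lambda>y. D N y * beta_density r s u v y)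
      = (1 / Beta (real r) (real s)) * Mij g p q u v"
  proof -
    have "(\<lambda>y. D N y * beta_density r s u v y) = (\<lambda>y. (1 / Beta (real r) (real s) / (v - u) ^ N) * f y)"
      unfolding beta_density_def f_def rm N by (auto simp: field_simps)
    then have "integral {u..v} (\<lambda>y. D N y * beta_density r s u v y)
        = (1 / Beta (real r) (real s) / (v - u) ^ N) * integral {u..v} f"
      using integral_cmul[of "{u..v}" "1 / Beta (real r) (real s) / (v - u) ^ N" f] by simp
    also have "\<dots> = (1 / Beta (real r) (real s)) * Mij g p q u v"
      unfolding I2 using assms(3) by simp
    finally show ?thesis .
  qed
  show ?thesis unfolding N rm DN using I1 I2 unfolding f_def by simp
qed

end
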